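(* Let $v\in V$, $e\in E_v$, and let $z\in\mathcal B_v$ be acceptable (i.e. $C_v(z)=z$) with $z(e)<b(e)$. The following are equivalent: (i) $e$ is interesting for $v$ under $z$; (ii) there is an acceptable $\tilde z\in\mathcal B_v$ such that $\tilde z\succ_v z$ and $\tilde z(e)>z(e)$; (iii) $C_v(z+\mathbf 1^e)\ne z$; (iv) $C_v(z+\mathbf 1^e)$ is either (a) $z+\mathbf 1^e$, or (b) $z+\mathbf 1^e-\mathbf 1^{e'}$ for some $e'\in E_v\setminus\{e\}$.
   Context: Let $G=(V,E)$ be a finite bipartite graph and $b\in\mathbb Z_+^E$ capacities. For $v\in V$, $E_v$ is the set of edges at $v$, $\mathcal B_v=\{z\in\mathbb Z_+^{E_v}: z(e)\le b(e)\ \forall e\in E_v\}$, $\mathbf 1^e$ the unit vector of $e$ in $\mathbb Z^{E_v}$, $|z|=\sum_e|z(e)|$, and $\wedge,\vee$ componentwise min and max. $C_v:\mathcal B_v\to\mathcal B_v$ is a choice function with $C_v(z)\le z$ such that for all $z,z'\in\mathcal B_v$: (A1) if $z\ge z'\ge C_v(z)$ then $C_v(z')=C_v(z)$; (A2) if $z\ge z'$ then $C_v(z)\wedge z'\le C_v(z')$; (A3) if $z\ge z'$ then $|C_v(z)|\ge|C_v(z')|$. $z$ is acceptable if $C_v(z)=z$; for distinct acceptable $z,z'$, $z'\prec_v z$ (equivalently $z\succ_v z'$) means $C_v(z\vee z')=z$. An edge $e\in E_v$ is interesting for $v$ under acceptable $z$ if there is $z'\in\mathcal B_v$ with $z'(e)>z(e)$,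 $z'(e')=z(e')$ for all $e'\ne e$, and $C_v(z')(e)>z(e)$. *)

theory Defs
  imports Main "HOL-Library.Function_Algebras"
begin

text \<open>Local setting at a vertex v: Ev is the (finite) set of edges at v,
  b the capacities. Vectors in Z_+^{E_v} are functions 'e => int that are
  nonnegative on Ev and zero outside Ev.\<close>

definition Bv :: "'e set \<Rightarrow> ('e \<Rightarrow> int) \<Rightarrow> ('e \<Rightarrow> int) set" where
  "Bv Ev b = {z. (\<forall>x. x \<notin> Ev \<longrightarrow> z x = 0) \<and> (\<forall>x\<in>Ev. 0 \<le> z x \<and> z x \<le> b x)}"

definition vnorm :: "'e set \<Rightarrow> ('e \<Rightarrow> int) \<Rightarrow> int" where
  "vnorm Ev z = (\<Sum>x\<in>Ev. \<bar>z x\<bar>)"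

definition vmin :: "('e \<Rightarrow> int) \<Rightarrow> ('e \<Rightarrow> int) \<Rightarrow> ('e \<Rightarrow> int)" where
  "vmin z z' = (\<lambda>x. min (z x) (z' x))"

definition vmax :: "('e \<Rightarrow> int) \<Rightarrow> ('e \<Rightarrow> int) \<Rightarrow> ('e \<Rightarrow> int)" where
  "vmax z z' = (\<lambda>x. max (z x) (z' x))"

definition unitv :: "'e \<Rightarrow> ('e \<Rightarrow> int)" where
  "unitv e = (\<lambda>x. if x = e then 1 else 0)"

definition choice_fn :: "'e set \<Rightarrow> ('e \<Rightarrow> int) \<Rightarrow> (('e \<Rightarrow> int) \<Rightarrow> ('e \<Rightarrow> int)) \<Rightarrow> bool" where
  "choice_fn Ev b C \<longleftrightarrow>
     (\<forall>z\<in>Bv Ev b. C z \<in> Bv Ev b \<and> C z \<le> z) \<and>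
     (\<forall>z\<in>Bv Ev b. \<forall>z'\<in>Bv Ev b. z \<ge> z' \<and> z' \<ge> C z \<longrightarrow> C z' = C z) \<and>
     (\<forall>z\<in>Bv Ev b. \<forall>z'\<in>Bv Ev b. z \<ge> z' \<longrightarrow> vmin (C z) z' \<le> C z') \<and>
     (\<forall>z\<in>Bv Ev b. \<forall>z'\<in>Bv Ev b. z \<ge> z' \<longrightarrow> vnorm Ev (C z) \<ge> vnorm Ev (C z'))"

definition acceptable :: "(('e \<Rightarrow> int) \<Rightarrow> ('e \<Rightarrow> int)) \<Rightarrow> ('e \<Rightarrow> int) \<Rightarrow> bool" where
  "acceptable C z \<longleftrightarrow> C z = z"

definition prefers :: "(('e \<Rightarrow> int) \<Rightarrow> ('e \<Rightarrow> int)) \<Rightarrow> ('e \<Rightarrow> int) \<Rightarrow> ('e \<Rightarrow> int) \<Rightarrow> bool" where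
  "prefers C z z' \<longleftrightarrow> acceptable C z \<and> acceptable C z' \<and> z \<noteq> z' \<and> C (vmax z z') = z"

definition interesting :: "'e set \<Rightarrow> ('e \<Rightarrow> int) \<Rightarrow> (('e \<Rightarrow> int) \<Rightarrow> ('e \<Rightarrow> int)) \<Rightarrow> ('e \<Rightarrow> int) \<Rightarrow> 'e \<Rightarrow> bool" where
  "interesting Ev b C z e \<longleftrightarrow>
     (\<exists>z'\<in>Bv Ev b. z' e > z e \<and> (\<forall>e'\<in>Ev. e' \<noteq> e \<longrightarrow> z' e' = z e') \<and> C z' e > z e)"

end

theory Submission
  imports Defs
begin

theorem lemma3p1:
  fixes Ev :: "'e set" and b :: "'e \<Rightarrow> int" and C :: "('e \<Rightarrow> int) \<Rightarrow> ('e \<Rightarrow> int)"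
    and z :: "'e \<Rightarrow> int" and e :: 'e
  assumes "finite Ev"
    and "\<forall>x\<in>Ev. 0 \<le> b x"
    and "choice_fn Ev b C"
    and "e \<in> Ev"
    and "z \<in> Bv Ev b"
    and "acceptable C z"
    and "z e < b e"
  shows "(interesting Ev b C z e \<longleftrightarrow>
           (\<exists>zt\<in>Bv Ev b. acceptable C zt \<and> prefers C zt z \<and> zt e > z e))
       \<and> ((\<exists>zt\<in>Bv Ev b. acceptable C zt \<and> prefers C zt z \<and> zt e > z e) \<longleftrightarrow>
           C (z + unitv e) \<noteq> z)
       \<and> (C (z + unitv e) \<noteq> z \<longleftrightarrow>
           (C (z + unitv e) = z + unitv e \<or>
            (\<exists>e'\<in>Ev - {e}. C (z + unitv e) = z + unitv e - unitv e')))"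
proof -
  note fin = assms(1) and eE = assms(4) and zB = assms(5) and lt = assms(7)
  have Cz: "C z = z" using assms(6) by (simp add: acceptable_def)
  have cf: "(\<forall>z\<in>Bv Ev b. C z \<in> Bv Ev b \<and> C z \<le> z) \<and>
     (\<forall>z\<in>Bv Ev b. \<forall>z'\<in>Bv Ev b. z \<ge> z' \<and> z' \<ge> C z \<longrightarrow> C z' = C z) \<and>
     (\<forall>z\<in>Bv Ev b. \<forall>z'\<in>Bv Ev b. z \<ge> z' \<longrightarrow> vmin (C z) z' \<le> C z') \<and>
     (\<forall>z\<in>Bv Ev b. \<forall>z'\<in>Bv Ev b. z \<ge> z' \<longrightarrow> vnorm Ev (C z) \<ge> vnorm Ev (C z'))"
    using assms(3) unfolding choice_fn_def .
  have A0: "\<And>y. y \<in> Bv Ev b \<Longrightarrow> C y \<in> Bv Ev b \<and> C y \<le> y"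
  proof -
    fix y assume "y \<in> Bv Ev b"
    moreover have "\<forall>z\<in>Bv Ev b. C z \<in> Bv Ev b \<and> C z \<le> z" using cf by (elim conjE)
    ultimately show "C y \<in> Bv Ev b \<and> C y \<le> y" by blast
  qed
  have A1: "\<And>y y'. y \<in> Bv Ev b \<Longrightarrow> y' \<in> Bv Ev b \<Longrightarrow> y \<ge> y' \<Longrightarrow> y' \<ge> C y \<Longrightarrow> C y' = C y"
  proof -
    fix y y' assume "y \<in> Bv Ev b" "y' \<in> Bv Ev b" "y \<ge> y'" "y' \<ge> C y"
    moreover have "\<forall>z\<in>Bv Ev b. \<forall>z'\<in>Bv Ev b. z \<ge> z' \<and> z' \<ge> C z \<longrightarrow> C z' = C z" using cf by (elim conjE)
    ultimately show "C y' = C y" by blast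
  qed
  have A2: "\<And>y y'. y \<in> Bv Ev b \<Longrightarrow> y' \<in> Bv Ev b \<Longrightarrow> y \<ge> y' \<Longrightarrow> vmin (C y) y' \<le> C y'"
  proof -
    fix y y' assume "y \<in> Bv Ev b" "y' \<in> Bv Ev b" "y \<ge> y'"
    moreover have "\<forall>z\<in>Bv Ev b. \<forall>z'\<in>Bv Ev b. z \<ge> z' \<longrightarrow> vmin (C z) z' \<le> C z'" using cf by (elim conjE)
    ultimately show "vmin (C y) y' \<le> C y'" by blast
  qed
  have A3: "\<And>y y'. y \<in> Bv Ev b \<Longrightarrow> y' \<in> Bv Ev b \<Longrightarrow> y \<ge> y' \<Longrightarrow> vnorm Ev (C y) \<ge> vnorm Ev (C y')"
  proof -
    fix y y' assume "y \<in> Bv Ev b" "y' \<in> Bv Ev b" "y \<ge> y'"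
    moreover have "\<forall>z\<in>Bv Ev b. \<forall>z'\<in>Bv Ev b. z \<ge> z' \<longrightarrow> vnorm Ev (C z) \<ge> vnorm Ev (C z')" using cf by (elim conjE)
    ultimately show "vnorm Ev (C y) \<ge> vnorm Ev (C y')" by blast
  qed
  define w where "w = z + unitv e"
  have wx: "\<And>x. w x = (if x = e then z x + 1 else z x)"
    by (simp add: w_def unitv_def)
  have zBv: "\<And>x. x \<notin> Ev \<Longrightarrow> z x = 0" "\<And>x. x \<in> Ev \<Longrightarrow> 0 \<le> z x \<and> z x \<le> b x"
    using zB by (auto simp: Bv_def)
  have wB: "w \<in> Bv Ev b" unfolding Bv_def using zBv eE lt by (auto simp: wx)
  have zw: "z \<le> w" by (simp add: le_fun_def wx)
  have CwB: "C w \<in> Bv Ev b" and Cww: "C w \<le> w" using A0[OF wB] by auto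
  have Cwnn: "\<And>x. 0 \<le> C w x" 
  proof -
    fix x
    have "(\<forall>x. x \<notin> Ev \<longrightarrow> C w x = 0) \<and> (\<forall>x\<in>Ev. 0 \<le> C w x \<and> C w x \<le> b x)"
      using CwB unfolding Bv_def by simp
    thus "0 \<le> C w x" by (cases "x \<in> Ev") auto
  qed
  have Cwle: "\<And>x. C w x \<le> w x" using Cww by (simp add: le_fun_def)
  have K: "C w \<noteq> z \<longleftrightarrow> C w e \<ge> z e + 1"
  proof
    assume ne: "C w \<noteq> z"
    show "C w e \<ge> z e + 1"
    proof (rule ccontr)
      assume nt: "\<not> ?thesis"
      have "C w \<le> z" unfolding le_fun_def
      proof
        fix x show "C w x \<le> z x" using Cwle[of x] nt by (cases "x = e") (auto simp: wx)
      qed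
      hence "C z = C w" using A1[OF wB zB zw] by blast
      thus False using ne Cz by simp
    qed
  next
    assume "C w e \<ge> z e + 1" thus "C w \<noteq> z" by auto
  qed
  have I: "interesting Ev b C z e \<longleftrightarrow> C w e \<ge> z e + 1"
  proof
    assume "interesting Ev b C z e"
    then obtain z' where z'B: "z' \<in> Bv Ev b" and z'e: "z' e > z e"
      and z'o: "\<forall>e'\<in>Ev. e' \<noteq> e \<longrightarrow> z' e' = z e'" and Cz'e: "C z' e > z e"
      unfolding interesting_def by blast
    have "\<And>x. x \<notin> Ev \<Longrightarrow> z' x = 0" using z'B by (auto simp: Bv_def)
    hence "w \<le> z'" using z'o z'e zBv by (auto simp: le_fun_def wx)
    hence "vmin (C z') w \<le> C w" using A2[OF z'B wB] by blast
    hence "min (C z' e) (w e) \<le> C w e" by (simp add: le_fun_def vmin_def)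
    thus "C w e \<ge> z e + 1" using Cz'e by (simp add: wx)
  next
    assume h: "C w e \<ge> z e + 1"
    show "interesting Ev b C z e" unfolding interesting_def
      using wB h by (intro bexI[of _ w]) (auto simp: wx)
  qed
  have II: "(\<exists>zt\<in>Bv Ev b. acceptable C zt \<and> prefers C zt z \<and> zt e > z e) \<longleftrightarrow> C w e \<ge> z e + 1"
  proof
    assume "\<exists>zt\<in>Bv Ev b. acceptable C zt \<and> prefers C zt z \<and> zt e > z e"
    then obtain zt where ztB: "zt \<in> Bv Ev b" and p: "prefers C zt z" and zte: "zt e > z e" by blast
    have Cm: "C (vmax zt z) = zt" using p by (simp add: prefers_def)
    have mB: "vmax zt z \<in> Bv Ev b" using ztB zB by (auto simp: Bv_def vmax_def)
    have "w \<le> vmax zt z" using zte by (auto simp: le_fun_def wx vmax_def)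
    hence "vmin (C (vmax zt z)) w \<le> C w" using A2[OF mB wB] by blast
    hence "min (zt e) (w e) \<le> C w e" by (simp add: le_fun_def vmin_def Cm)
    thus "C w e \<ge> z e + 1" using zte by (simp add: wx)
  next
    assume h: "C w e \<ge> z e + 1"
    have acc: "C (C w) = C w" using A1[OF wB CwB Cww] by simp
    have mB: "vmax (C w) z \<in> Bv Ev b" using CwB zB by (auto simp: Bv_def vmax_def)
    have "vmax (C w) z \<le> w" using Cwle zw by (auto simp: le_fun_def vmax_def)
    moreover have "C w \<le> vmax (C w) z" by (auto simp: le_fun_def vmax_def)
    ultimately have "C (vmax (C w) z) = C w" using A1[OF wB mB] by blast
    thus "\<exists>zt\<in>Bv Ev b. acceptable C zt \<and> prefers C zt z \<and> zt e > z e"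
      using CwB acc h assms(6) K
      by (intro bexI[of _ "C w"]) (auto simp: acceptable_def prefers_def)
  qed
  have IV: "(C w = w \<or> (\<exists>e'\<in>Ev - {e}. C w = w - unitv e')) \<longleftrightarrow> C w e \<ge> z e + 1"
  proof
    assume "C w = w \<or> (\<exists>e'\<in>Ev - {e}. C w = w - unitv e')"
    thus "C w e \<ge> z e + 1" by (auto simp: wx unitv_def split: if_splits)
  next
    assume h: "C w e \<ge> z e + 1"
    define d where "d = (\<lambda>x. w x - C w x)"
    have dnn: "\<And>x. 0 \<le> d x" using Cwle by (simp add: d_def)
    have de: "d e = 0" using h Cwle[of e] by (simp add: d_def wx)
    have dout: "\<And>x. x \<notin> Ev \<Longrightarrow> d x = 0"
      using CwB zBv eE by (auto simp: d_def wx Bv_def)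
    have n1: "vnorm Ev (C w) \<ge> vnorm Ev z" using A3[OF wB zB zw] Cz by simp
    have "vnorm Ev (C w) = (\<Sum>x\<in>Ev. C w x)" unfolding vnorm_def using Cwnn by simp
    moreover have "vnorm Ev z = (\<Sum>x\<in>Ev. z x)" unfolding vnorm_def using zBv
      by (intro sum.cong) auto
    moreover have "(\<Sum>x\<in>Ev. w x) = (\<Sum>x\<in>Ev. z x) + 1"
    proof -
      have "(\<Sum>x\<in>Ev. w x) = (\<Sum>x\<in>Ev. z x + unitv e x)" by (simp add: w_def)
      also have "\<dots> = (\<Sum>x\<in>Ev. z x) + (\<Sum>x\<in>Ev. unitv e x)" by (simp add: sum.distrib)
      also have "(\<Sum>x\<in>Ev. unitv e x) = 1" using fin eE by (simp add: unitv_def)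
      finally show ?thesis .
    qed
    moreover have "(\<Sum>x\<in>Ev. d x) = (\<Sum>x\<in>Ev. w x) - (\<Sum>x\<in>Ev. C w x)"
      by (simp add: d_def sum_subtractf)
    ultimately have ds: "(\<Sum>x\<in>Ev. d x) \<le> 1" using n1 by linarith
    show "C w = w \<or> (\<exists>e'\<in>Ev - {e}. C w = w - unitv e')"
    proof (cases "\<forall>x. d x = 0")
      case True
      hence "C w = w" by (auto simp: d_def)
      thus ?thesis by simp
    next
      case False
      then obtain e' where de': "d e' \<noteq> 0" by blast
      have e'E: "e' \<in> Ev" using dout de' by blast
      have e'e: "e' \<noteq> e" using de de' by blast
      have "d e' \<le> (\<Sum>x\<in>Ev. d x)" using fin e'E dnn by (intro member_le_sum) auto
      hence d1: "d e' = 1" using ds dnn[of e'] de' by linarith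
      have oth: "d x = 0" if "x \<noteq> e'" for x
      proof (cases "x \<in> Ev")
        case True
        have "(\<Sum>y\<in>{e',x}. d y) \<le> (\<Sum>x\<in>Ev. d x)"
          using fin True e'E dnn by (intro sum_mono2) auto
        thus ?thesis using that d1 ds dnn[of x] by simp
      next
        case False thus ?thesis using dout by simp
      qed
      have "C w = w - unitv e'"
      proof
        fix x show "C w x = (w - unitv e') x"
          using oth[of x] d1 by (cases "x = e'") (auto simp: d_def unitv_def)
      qed
      thus ?thesis using e'E e'e by blast
    qed
  qed
  show ?thesis using I II IV K unfolding w_def by simp
qed

end
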